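(* Let $k\ge2$, $q$, $r$ be integers with $1\le q\le k-1$, $0\le r\le k$, and $r\equiv k \pmod 2$. Let $\beta>0$, $J\in\mathbb{R}$, $\theta=\tanh(\beta J)$, $f_\theta(h)=\operatorname{arctanh}(\theta\tanh h)$, and let $(h_1,h_2)$ be any real solution of $h_1=q f_\theta(h_2)$, $h_2=k f_\theta(h_1)$. Let $h=\{h_x\}_{x\in V}$ be an alternating boundary condition with parameters $q,r,h_1,h_2$ on the half tree (defined in the context), and let $$a(t)=-\frac{1}{2\beta}\ln\big[4\cosh(t+\beta J)\cosh(t-\beta J)\big],\qquad F_n(h)=-\frac{1}{\beta|V_n|}\ln Z_n(h).$$ (a) If $r\neq0$, then $\lim_{n\to\infty}F_n(h)$ exists (whatever the value of $h$ at the root) and equals $$\frac{k(k-q)}{2k^2-rk-rq}\left(a(0)+\frac{k-r}{k-q}\,a(h_1)+\frac{q(k-r)}{k(k-q)}\,a(h_2)\right).$$ (b) If $r=0$ and the root value is $0$, $h_2$ or $-h_2$, then $$\lim_{m\to\infty}F_{2m}(h)=\frac{k-q}{k+1}a(0)+\frac{1}{k+1}a(h_1)+\frac{q}{k+1}a(h_2),\qquad \lim_{m\to\infty}F_{2m+1}(h)=\frac{k-q}{k(k+1)}a(0)+\frac{k}{k+1}a(h_1)+\frac{q}{k(k+1)}a(h_2);$$ if $r=0$ and the root value is $h_1$ or $-h_1$, then $$\lim_{m\to\infty}F_{2m}(h)=\frac{k-q}{k(k+1)}a(0)+\frac{k}{k+1}a(h_1)+\frac{q}{k(k+1)}a(h_2),\qquad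 \lim_{m\to\infty}F_{2m+1}(h)=\frac{k-q}{k+1}a(0)+\frac{1}{k+1}a(h_1)+\frac{q}{k+1}a(h_2).$$
   Context: Half tree: a rooted tree with vertex set $V$ and root $x^0$ in which every vertex (including the root) has exactly $k$ children; so the root has $k$ neighbours and every other vertex has $k+1$. $d(x,y)$ is the graph distance, $V_n=\{x: d(x,x^0)\le n\}$, $W_n=\{x:d(x,x^0)=n\}$, and for $x\in W_n$, $S(x)=\{y\in W_{n+1}: d(x,y)=1\}$ (the $k$ children of $x$). Ising model with zero external field: for a boundary condition $h=\{h_x\in\mathbb{R}\}_{x\in V}$, $$Z_n(h)=\sum_{\sigma\in\{-1,1\}^{V_n}}\exp\Big\{\beta J\sum_{\langle x,y\rangle\subset V_n}\sigma(x)\sigma(y)+\sum_{x\in W_n}h_x\sigma(x)\Big\},$$ where the first sum is over nearest-neighbour pairs with both endpoints in $V_n$. Alternating boundary condition with parameters $q,r,h_1,h_2$: the root is assigned a value $h_{x^0}\in\{0,\pm h_1,\pm h_2\}$, and values are assigned inductively to children: (i) if $h_x=0$, then $h_y=0$ on $r$ vertices $y\in S(x)$, $h_y=h_1$ on half of the remaining $k-r$ vertices of $S(x)$, and $h_y=-h_1$ on the other half; (ii) if $h_x=h_1$ (resp. $-h_1$), then $h_y=h_2$ (resp. $-h_2$) on $q$ vertices of $S(x)$ and $h_y=0$ on the other $k-q$; (iii) if $h_x=h_2$ (resp. $-h_2$), then $h_y=h_1$ (resp. $-h_1$) for all $y\in S(x)$. (The choice of which children receive which values is arbitrary.) *)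

theory Defs
  imports Complex_Main "HOL-Library.FuncSet"
begin

text \<open>Half tree: vertices are finite lists of child indices < k; the root is [],
  the children of x are i # x (i < k), so the parent of a non-root y is tl y and
  d(y, root) = length y.\<close>

definition htV :: "nat \<Rightarrow> nat list set" where
  "htV k = {x. \<forall>i\<in>set x. i < k}"

definition htVn :: "nat \<Rightarrow> nat \<Rightarrow> nat list set" where
  "htVn k n = {x \<in> htV k. length x \<le> n}"

definition htWn :: "nat \<Rightarrow> nat \<Rightarrow> nat list set" where
  "htWn k n = {x \<in> htV k. length x = n}"

text \<open>Partition function Z_n(h): configurations sigma on V_n with values in {-1,1};
  nearest-neighbour pairs inside V_n are exactly {y, tl y} with y in V_n, y non-root.\<close>

definition Zn :: "nat \<Rightarrow> real \<Rightarrow> real \<Rightarrow> nat \<Rightarrow> (nat list \<Rightarrow> real) \<Rightarrow> real" where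
  "Zn k beta J n h =
     (\<Sum>\<sigma>\<in>PiE (htVn k n) (\<lambda>_. {-1, 1}).
        exp (beta * J * (\<Sum>y\<in>htVn k n - {[]}. \<sigma> y * \<sigma> (tl y))
             + (\<Sum>x\<in>htWn k n. h x * \<sigma> x)))"

definition free_energy :: "nat \<Rightarrow> real \<Rightarrow> real \<Rightarrow> nat \<Rightarrow> (nat list \<Rightarrow> real) \<Rightarrow> real" where
  "free_energy k beta J n h = - ln (Zn k beta J n h) / (beta * real (card (htVn k n)))"

definition bc_val :: "real \<Rightarrow> real \<Rightarrow> int \<Rightarrow> real" where
  "bc_val h1 h2 l = (if l = 1 then h1 else if l = -1 then - h1
                     else if l = 2 then h2 else if l = -2 then - h2 else 0)"

definition alternating_labeling :: "nat \<Rightarrow> nat \<Rightarrow> nat \<Rightarrow> (nat list \<Rightarrow> int) \<Rightarrow> bool" where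
  "alternating_labeling k q r lab \<longleftrightarrow>
     lab [] \<in> {-2, -1, 0, 1, 2} \<and>
     (\<forall>x\<in>htV k.
        (lab x = 0 \<longrightarrow>
           card {i. i < k \<and> lab (i # x) = 0} = r \<and>
           card {i. i < k \<and> lab (i # x) = 1} = (k - r) div 2 \<and>
           card {i. i < k \<and> lab (i # x) = -1} = (k - r) div 2) \<and>
        (\<forall>s\<in>{-1, 1::int}. lab x = s \<longrightarrow>
           card {i. i < k \<and> lab (i # x) = 2 * s} = q \<and>
           card {i. i < k \<and> lab (i # x) = 0} = k - q) \<and>
        (\<forall>s\<in>{-1, 1::int}. lab x = 2 * s \<longrightarrow>
           (\<forall>i<k. lab (i # x) = s)))"

definition alternating_bc :: "nat \<Rightarrow> nat \<Rightarrow> nat \<Rightarrow> real \<Rightarrow> real \<Rightarrow> (nat list \<Rightarrow> int)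
    \<Rightarrow> (nat list \<Rightarrow> real) \<Rightarrow> bool" where
  "alternating_bc k q r h1 h2 lab h \<longleftrightarrow>
     alternating_labeling k q r lab \<and> (\<forall>x\<in>htV k. h x = bc_val h1 h2 (lab x))"

definition afun :: "real \<Rightarrow> real \<Rightarrow> real \<Rightarrow> real" where
  "afun beta J t = - (1 / (2 * beta)) * ln (4 * cosh (t + beta * J) * cosh (t - beta * J))"

end

theory Submission
  imports Defs
begin

lemma htWn_Suc: "htWn k (Suc n) = (\<lambda>(i,x). i#x) ` ({..<k} \<times> htWn k n)"
proof (rule set_eqI)
  fix y show "y \<in> htWn k (Suc n) \<longleftrightarrow> y \<in> (\<lambda>(i,x). i#x) ` ({..<k} \<times> htWn k n)"
    by (cases y) (auto simp: htWn_def htV_def)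
qed

lemma finite_htWn: "finite (htWn k n)"
  by (induction n) (auto simp: htWn_Suc, simp add: htWn_def htV_def)

lemma sum_htWn_Suc: "(\<Sum>y\<in>htWn k (Suc n). g y) = (\<Sum>x\<in>htWn k n. \<Sum>i<k. g (i#x))"
proof -
  have inj: "inj_on (\<lambda>(i,x). i#x) ({..<k} \<times> htWn k n)" by (auto simp: inj_on_def)
  have "(\<Sum>y\<in>htWn k (Suc n). g y) = (\<Sum>p\<in>{..<k} \<times> htWn k n. g ((\<lambda>(i,x). i#x) p))"
    unfolding htWn_Suc by (simp add: sum.reindex[OF inj] o_def)
  also have "\<dots> = (\<Sum>i<k. \<Sum>x\<in>htWn k n. g (i#x))"
    by (simp add: sum.cartesian_product split_def)
  also have "\<dots> = (\<Sum>x\<in>htWn k n. \<Sum>i<k. g (i#x))" by (rule sum.swap)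
  finally show ?thesis .
qed

lemma card_htWn: "card (htWn k n) = k ^ n"
proof (induction n)
  case 0
  have "htWn k 0 = {[]}" by (auto simp: htWn_def htV_def)
  then show ?case by simp
next
  case (Suc n)
  have "card (htWn k (Suc n)) = (\<Sum>y\<in>htWn k (Suc n). 1)" by simp
  also have "\<dots> = (\<Sum>x\<in>htWn k n. \<Sum>i<k. (1::nat))" by (rule sum_htWn_Suc)
  also have "\<dots> = k * k ^ n" using Suc by simp
  finally show ?case by simp
qed

lemma htVn_0: "htVn k 0 = {[]}" by (auto simp: htVn_def htV_def)
lemma htWn_0: "htWn k 0 = {[]}" by (auto simp: htWn_def htV_def)

lemma htVn_Suc: "htVn k (Suc n) = htVn k n \<union> htWn k (Suc n)"
  by (auto simp: htVn_def htWn_def)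

lemma htVn_Wn_disj: "htVn k n \<inter> htWn k (Suc n) = {}"
  by (auto simp: htVn_def htWn_def)

lemma finite_htVn: "finite (htVn k n)"
  by (induction n) (auto simp: htVn_0 htVn_Suc finite_htWn)

lemma card_htVn: "card (htVn k n) = (\<Sum>j\<le>n. k ^ j)"
proof (induction n)
  case 0 then show ?case by (simp add: htVn_0)
next
  case (Suc n)
  have "card (htVn k (Suc n)) = card (htVn k n) + card (htWn k (Suc n))"
    unfolding htVn_Suc by (rule card_Un_disjoint[OF finite_htVn finite_htWn htVn_Wn_disj])
  then show ?case using Suc by (simp add: card_htWn)
qed

lemma htWn_sub: "htWn k n \<subseteq> htVn k n" by (auto simp: htWn_def htVn_def)

definition ff :: "real \<Rightarrow> real \<Rightarrow> real \<Rightarrow> real" where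
  "ff beta J t = artanh (tanh (beta * J) * tanh t)"

lemma one_plus_tanh: "1 + tanh (b::real) * tanh t = cosh (t + b) / (cosh t * cosh b)"
  by (simp add: tanh_def cosh_add field_simps)
lemma one_minus_tanh: "1 - tanh (b::real) * tanh t = cosh (t - b) / (cosh t * cosh b)"
  by (simp add: tanh_def cosh_diff field_simps)

lemma ff_eq: "ff beta J t = (ln (cosh (t + beta*J)) - ln (cosh (t - beta*J))) / 2"
proof -
  have "(1 + tanh (beta*J) * tanh t) / (1 - tanh (beta*J) * tanh t) = cosh (t + beta*J) / cosh (t - beta*J)"
    by (simp add: one_plus_tanh one_minus_tanh)
  then show ?thesis by (simp add: ff_def artanh_def ln_div)
qed

lemma leaf_identity:
  assumes "beta > 0" and "s \<in> {-1, 1::real}"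
  shows "exp (beta*J*s + t) + exp (-(beta*J*s + t)) = exp (- beta * afun beta J t) * exp (ff beta J t * s)"
proof -
  define cp where "cp = cosh (t + beta*J)"
  define cm where "cm = cosh (t - beta*J)"
  have pos: "cp > 0" "cm > 0" by (simp_all add: cp_def cm_def)
  have "- beta * afun beta J t = ln (4 * cp * cm) / 2"
    using assms(1) by (simp add: afun_def cp_def cm_def)
  also have "\<dots> = ln 2 + (ln cp + ln cm) / 2"
    using pos ln_mult[of 2 2] by (simp add: ln_mult ln_realpow[symmetric] field_simps)
  finally have A: "exp (- beta * afun beta J t) = 2 * exp ((ln cp + ln cm) / 2)"
    by (simp add: exp_add)
  have B: "ff beta J t = (ln cp - ln cm) / 2" by (simp add: ff_eq cp_def cm_def)
  have C: "exp (- beta * afun beta J t) * exp (ff beta J t * s) = 2 * (exp ((ln cp + ln cm) / 2) * exp ((ln cp - ln cm) / 2 * s))"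
    by (simp only: A B mult.assoc)
  have "2 * cosh (t + beta*J*s) = exp (- beta * afun beta J t) * exp (ff beta J t * s)"
  proof (cases "s = 1")
    case True
    have "exp ((ln cp + ln cm) / 2) * exp ((ln cp - ln cm) / 2 * s) = exp (ln cp)"
      using True by (simp add: exp_add[symmetric] field_simps)
    then show ?thesis using True pos unfolding C by (simp add: cp_def)
  next
    case False
    then have s: "s = -1" using assms by auto
    have "exp ((ln cp + ln cm) / 2) * exp ((ln cp - ln cm) / 2 * s) = exp (ln cm)"
      using s by (simp add: exp_add[symmetric] field_simps)
    then show ?thesis using s pos unfolding C by (simp add: cm_def)
  qed
  then show ?thesis by (simp add: cosh_def algebra_simps)
qed

lemma tl_in_htVn: "y \<in> htVn k (Suc n) \<Longrightarrow> tl y \<in> htVn k n"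
  by (cases y) (auto simp: htVn_def htV_def)

lemma tl_in_htWn: "y \<in> htWn k (Suc n) \<Longrightarrow> tl y \<in> htWn k n"
  by (cases y) (auto simp: htWn_def htV_def)

lemma Zn_Suc:
  assumes beta: "beta > 0"
    and fixp: "\<forall>x\<in>htWn k n. h x = (\<Sum>i<k. ff beta J (h (i#x)))"
  shows "Zn k beta J (Suc n) h =
    (\<Prod>y\<in>htWn k (Suc n). exp (- beta * afun beta J (h y))) * Zn k beta J n h"
proof -
  define V where "V = htVn k n"
  define W' where "W' = htWn k (Suc n)"
  define W where "W = htWn k n"
  define S where "S = (\<lambda>_::nat list. {-1, 1::real})"
  define b where "b = beta * J"
  define E where "E = (\<lambda>\<sigma>::nat list \<Rightarrow> real. exp (b * (\<Sum>y\<in>htVn k (Suc n) - {[]}. \<sigma> y * \<sigma> (tl y))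
             + (\<Sum>x\<in>W'. h x * \<sigma> x)))"
  define mg where "mg = (\<lambda>(\<sigma>1::nat list \<Rightarrow> real, \<sigma>2::nat list \<Rightarrow> real) x. if x \<in> V then \<sigma>1 x else \<sigma>2 x)"
  define C where "C = (\<lambda>y. exp (- beta * afun beta J (h y)))"
  have fV: "finite V" and fW': "finite W'" and fW: "finite W"
    by (simp_all add: V_def W'_def W_def finite_htVn finite_htWn)
  have disj: "V \<inter> W' = {}" by (simp add: V_def W'_def htVn_Wn_disj)
  have VS: "htVn k (Suc n) = V \<union> W'" by (simp add: V_def W'_def htVn_Suc)
  have WV: "W \<subseteq> V" by (simp add: W_def V_def htWn_sub)
  have mgr: "mg (restrict a V, restrict a W') = a" if "a \<in> PiE (V \<union> W') S" for a
    using that by (auto simp: mg_def PiE_def extensional_def fun_eq_iff)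
  have "Zn k beta J (Suc n) h = (\<Sum>\<sigma>\<in>PiE (V \<union> W') S. E \<sigma>)"
    by (simp add: Zn_def E_def VS S_def b_def W'_def)
  also have "\<dots> = (\<Sum>p\<in>PiE V S \<times> PiE W' S. E (mg p))"
    using disj mgr
    by (intro sum.reindex_bij_witness[of _ mg "\<lambda>\<sigma>. (restrict \<sigma> V, restrict \<sigma> W')"])
       (simp_all add: mgr, auto simp: mg_def PiE_def extensional_def Pi_def fun_eq_iff split: prod.splits)
  also have "\<dots> = (\<Sum>\<sigma>1\<in>PiE V S. \<Sum>\<sigma>2\<in>PiE W' S.
       exp (b * (\<Sum>y\<in>V - {[]}. \<sigma>1 y * \<sigma>1 (tl y))) *
       (\<Prod>y\<in>W'. exp (b * \<sigma>2 y * \<sigma>1 (tl y) + h y * \<sigma>2 y)))"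
  proof -
    have "E (mg (\<sigma>1, \<sigma>2)) = exp (b * (\<Sum>y\<in>V - {[]}. \<sigma>1 y * \<sigma>1 (tl y))) *
       (\<Prod>y\<in>W'. exp (b * \<sigma>2 y * \<sigma>1 (tl y) + h y * \<sigma>2 y))" for \<sigma>1 \<sigma>2
    proof -
      have nil: "[] \<notin> W'" by (simp add: W'_def htWn_def)
      have split: "htVn k (Suc n) - {[]} = (V - {[]}) \<union> W'" using VS nil by auto
      have s1: "(\<Sum>y\<in>htVn k (Suc n) - {[]}. mg (\<sigma>1, \<sigma>2) y * mg (\<sigma>1, \<sigma>2) (tl y)) =
          (\<Sum>y\<in>V - {[]}. \<sigma>1 y * \<sigma>1 (tl y)) + (\<Sum>y\<in>W'. \<sigma>2 y * \<sigma>1 (tl y))"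
      proof -
        have "(\<Sum>y\<in>htVn k (Suc n) - {[]}. mg (\<sigma>1, \<sigma>2) y * mg (\<sigma>1, \<sigma>2) (tl y)) =
          (\<Sum>y\<in>V - {[]}. mg (\<sigma>1, \<sigma>2) y * mg (\<sigma>1, \<sigma>2) (tl y)) +
          (\<Sum>y\<in>W'. mg (\<sigma>1, \<sigma>2) y * mg (\<sigma>1, \<sigma>2) (tl y))"
          unfolding split using fV fW' disj by (intro sum.union_disjoint) auto
        moreover have "(\<Sum>y\<in>V - {[]}. mg (\<sigma>1, \<sigma>2) y * mg (\<sigma>1, \<sigma>2) (tl y)) =
             (\<Sum>y\<in>V - {[]}. \<sigma>1 y * \<sigma>1 (tl y))"
        proof (rule sum.cong[OF refl])
          fix y assume y: "y \<in> V - {[]}"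
          then have "tl y \<in> V" unfolding V_def
            by (cases y) (auto simp: htVn_def htV_def)
          then show "mg (\<sigma>1, \<sigma>2) y * mg (\<sigma>1, \<sigma>2) (tl y) = \<sigma>1 y * \<sigma>1 (tl y)"
            using y by (simp add: mg_def)
        qed
        moreover have "(\<Sum>y\<in>W'. mg (\<sigma>1, \<sigma>2) y * mg (\<sigma>1, \<sigma>2) (tl y)) = (\<Sum>y\<in>W'. \<sigma>2 y * \<sigma>1 (tl y))"
        proof (rule sum.cong[OF refl])
          fix y assume y: "y \<in> W'"
          then have "tl y \<in> V" "y \<notin> V" using WV disj tl_in_htWn[of y k n] by (auto simp: W'_def W_def)
          then show "mg (\<sigma>1, \<sigma>2) y * mg (\<sigma>1, \<sigma>2) (tl y) = \<sigma>2 y * \<sigma>1 (tl y)"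
            by (simp add: mg_def)
        qed
        ultimately show ?thesis by simp
      qed
      have s2: "(\<Sum>x\<in>W'. h x * mg (\<sigma>1, \<sigma>2) x) = (\<Sum>x\<in>W'. h x * \<sigma>2 x)"
        using disj by (intro sum.cong) (auto simp: mg_def)
      have "E (mg (\<sigma>1, \<sigma>2)) = exp (b * (\<Sum>y\<in>V - {[]}. \<sigma>1 y * \<sigma>1 (tl y)) +
            (\<Sum>y\<in>W'. b * \<sigma>2 y * \<sigma>1 (tl y) + h y * \<sigma>2 y))"
        unfolding E_def s1 s2 by (simp add: algebra_simps sum_distrib_left sum.distrib)
      also have "\<dots> = exp (b * (\<Sum>y\<in>V - {[]}. \<sigma>1 y * \<sigma>1 (tl y))) *
       (\<Prod>y\<in>W'. exp (b * \<sigma>2 y * \<sigma>1 (tl y) + h y * \<sigma>2 y))"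
        using fW' by (simp add: exp_add exp_sum)
      finally show ?thesis .
    qed
    then have "E (mg p) = exp (b * (\<Sum>y\<in>V - {[]}. fst p y * fst p (tl y))) *
       (\<Prod>y\<in>W'. exp (b * snd p y * fst p (tl y) + h y * snd p y))" for p
      by (cases p) simp
    then show ?thesis by (simp add: sum.cartesian_product split_def)
  qed
  also have "\<dots> = (\<Sum>\<sigma>1\<in>PiE V S. exp (b * (\<Sum>y\<in>V - {[]}. \<sigma>1 y * \<sigma>1 (tl y))) *
       (\<Prod>y\<in>W'. \<Sum>s\<in>{-1,1::real}. exp (b * s * \<sigma>1 (tl y) + h y * s)))"
  proof (intro sum.cong refl)
    fix \<sigma>1
    have "(\<Sum>\<sigma>2\<in>PiE W' S. (\<Prod>y\<in>W'. exp (b * \<sigma>2 y * \<sigma>1 (tl y) + h y * \<sigma>2 y))) =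
          (\<Prod>y\<in>W'. \<Sum>s\<in>{-1,1::real}. exp (b * s * \<sigma>1 (tl y) + h y * s))"
      unfolding S_def using fW' by (rule prod_sum_PiE[symmetric]) auto
    then show "(\<Sum>\<sigma>2\<in>PiE W' S. exp (b * (\<Sum>y\<in>V - {[]}. \<sigma>1 y * \<sigma>1 (tl y))) *
       (\<Prod>y\<in>W'. exp (b * \<sigma>2 y * \<sigma>1 (tl y) + h y * \<sigma>2 y))) =
      exp (b * (\<Sum>y\<in>V - {[]}. \<sigma>1 y * \<sigma>1 (tl y))) *
       (\<Prod>y\<in>W'. \<Sum>s\<in>{-1,1::real}. exp (b * s * \<sigma>1 (tl y) + h y * s))"
      by (simp only: sum_distrib_left[symmetric])
  qed
  also have "\<dots> = (\<Sum>\<sigma>1\<in>PiE V S. exp (b * (\<Sum>y\<in>V - {[]}. \<sigma>1 y * \<sigma>1 (tl y))) *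
       (\<Prod>y\<in>W'. C y * exp (ff beta J (h y) * \<sigma>1 (tl y))))"
  proof (intro sum.cong refl arg_cong2[where f="(*)"] prod.cong)
    fix \<sigma>1 y assume s: "\<sigma>1 \<in> PiE V S" and y: "y \<in> W'"
    have "tl y \<in> V" using y WV tl_in_htWn[of y k n] by (auto simp: W'_def W_def)
    then have st: "\<sigma>1 (tl y) \<in> {-1, 1}" using s by (auto simp: S_def PiE_def Pi_def)
    have "(\<Sum>s\<in>{-1,1::real}. exp (b * s * \<sigma>1 (tl y) + h y * s)) =
        exp (beta*J*\<sigma>1 (tl y) + h y) + exp (-(beta*J*\<sigma>1 (tl y) + h y))"
      by (simp add: b_def)
    also have "\<dots> = C y * exp (ff beta J (h y) * \<sigma>1 (tl y))"
      unfolding C_def by (rule leaf_identity[OF beta st])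
    finally show "(\<Sum>s\<in>{-1,1::real}. exp (b * s * \<sigma>1 (tl y) + h y * s)) = C y * exp (ff beta J (h y) * \<sigma>1 (tl y))" .
  qed
  also have "\<dots> = (\<Sum>\<sigma>1\<in>PiE V S. (\<Prod>y\<in>W'. C y) * exp (b * (\<Sum>y\<in>V - {[]}. \<sigma>1 y * \<sigma>1 (tl y))
       + (\<Sum>x\<in>W. h x * \<sigma>1 x)))"
  proof (intro sum.cong refl)
    fix \<sigma>1
    have "(\<Sum>y\<in>W'. ff beta J (h y) * \<sigma>1 (tl y)) = (\<Sum>x\<in>W. \<Sum>i<k. ff beta J (h (i#x)) * \<sigma>1 x)"
      unfolding W'_def W_def by (simp add: sum_htWn_Suc)
    also have "\<dots> = (\<Sum>x\<in>W. h x * \<sigma>1 x)"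
      using fixp by (simp add: W_def sum_distrib_right)
    finally have e: "(\<Sum>y\<in>W'. ff beta J (h y) * \<sigma>1 (tl y)) = (\<Sum>x\<in>W. h x * \<sigma>1 x)" .
    have "(\<Prod>y\<in>W'. C y * exp (ff beta J (h y) * \<sigma>1 (tl y))) = (\<Prod>y\<in>W'. C y) * exp (\<Sum>x\<in>W. h x * \<sigma>1 x)"
      using fW' by (simp add: prod.distrib exp_sum e[symmetric])
    then show "exp (b * (\<Sum>y\<in>V - {[]}. \<sigma>1 y * \<sigma>1 (tl y))) *
       (\<Prod>y\<in>W'. C y * exp (ff beta J (h y) * \<sigma>1 (tl y))) =
       (\<Prod>y\<in>W'. C y) * exp (b * (\<Sum>y\<in>V - {[]}. \<sigma>1 y * \<sigma>1 (tl y)) + (\<Sum>x\<in>W. h x * \<sigma>1 x))"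
      by (simp add: exp_add)
  qed
  also have "\<dots> = (\<Prod>y\<in>W'. C y) * Zn k beta J n h"
    by (simp add: Zn_def sum_distrib_left V_def W_def S_def b_def)
  finally show ?thesis by (simp add: C_def W'_def)
qed

lemma Zn_pos: "Zn k beta J n h > 0"
proof -
  have "PiE (htVn k n) (\<lambda>_. {-1, 1::real}) \<noteq> {}" by (simp add: PiE_eq_empty_iff)
  moreover have "finite (PiE (htVn k n) (\<lambda>_. {-1, 1::real}))" by (simp add: finite_PiE finite_htVn)
  ultimately show ?thesis unfolding Zn_def by (intro sum_pos) auto
qed

lemma cover:
  fixes k :: nat
  assumes "finite L0" "(\<Sum>l\<in>L0. card {i. i<k \<and> \<phi> i = l}) = k" "i < k"
  shows "\<phi> i \<in> L0"
proof -
  let ?P = "\<lambda>l. {i. i<k \<and> \<phi> i = l}"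
  have "card (\<Union>l\<in>L0. ?P l) = (\<Sum>l\<in>L0. card (?P l))"
    using assms(1) by (intro card_UN_disjoint) auto
  also have "\<dots> = card {..<k}" using assms(2) by simp
  finally have "(\<Union>l\<in>L0. ?P l) = {..<k}"
    by (intro card_subset_eq) auto
  then show ?thesis using assms(3) by auto
qed

lemma group_sum:
  fixes k :: nat
  assumes "\<forall>i<k. \<phi> i \<in> L0" "finite L0"
  shows "(\<Sum>i<k. g (\<phi> i)) = (\<Sum>l\<in>L0. real (card {i. i<k \<and> \<phi> i = l}) * (g l :: real))"
proof -
  have "(\<Sum>i<k. g (\<phi> i)) = (\<Sum>i<k. \<Sum>l\<in>L0. if \<phi> i = l then g l else 0)"
    using assms by (intro sum.cong refl) (simp add: sum.delta)
  also have "\<dots> = (\<Sum>l\<in>L0. \<Sum>i<k. if \<phi> i = l then g l else 0)" by (rule sum.swap)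
  also have "\<dots> = (\<Sum>l\<in>L0. real (card {i. i<k \<and> \<phi> i = l}) * g l)"
  proof (intro sum.cong refl)
    fix l
    have "(\<Sum>i<k. if \<phi> i = l then g l else 0) = (\<Sum>i\<in>{i. i<k \<and> \<phi> i = l}. g l)"
    proof -
      have "(\<Sum>i<k. if \<phi> i = l then g l else 0) = (\<Sum>i\<in>{..<k} \<inter> {i. \<phi> i = l}. g l)"
        by (subst sum.If_cases) auto
      also have "{..<k} \<inter> {i. \<phi> i = l} = {i. i<k \<and> \<phi> i = l}" by auto
      finally show ?thesis .
    qed
    then show "(\<Sum>i<k. if \<phi> i = l then g l else 0) = real (card {i. i<k \<and> \<phi> i = l}) * g l"
      by simp
  qed
  finally show ?thesis .
qed

definition Tg :: "nat \<Rightarrow> nat \<Rightarrow> nat \<Rightarrow> (int \<Rightarrow> real) \<Rightarrow> int \<Rightarrow> real" where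
  "Tg k q r g l = (if l = 0 then real r * g 0 + real ((k-r) div 2) * (g 1 + g (-1))
     else if l = 1 then real q * g 2 + real (k-q) * g 0
     else if l = -1 then real q * g (-2) + real (k-q) * g 0
     else if l = 2 then real k * g 1 else real k * g (-1))"

lemma children:
  assumes alt: "alternating_labeling k q r lab" and rk: "r \<le> k" "r mod 2 = k mod 2" and qk: "q \<le> k"
    and x: "x \<in> htV k" and lx: "lab x \<in> {-2,-1,0,1,2}"
  shows "(\<forall>i<k. lab (i#x) \<in> {-2,-1,0,1,2}) \<and> (\<Sum>i<k. g (lab (i#x))) = Tg k q r g (lab x)"
proof -
  let ?c = "\<lambda>l. card {i. i<k \<and> lab (i#x) = l}"
  let ?\<phi> = "\<lambda>i. lab (i#x)"
  have ev: "(k - r) div 2 + (k - r) div 2 = k - r" using rk by presburger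
  have A: "\<forall>l\<in>{-1,1::int}. lab x = l \<longrightarrow> ?c (2*l) = q \<and> ?c 0 = k - q"
    using alt x unfolding alternating_labeling_def by blast
  have B: "\<forall>l\<in>{-1,1::int}. lab x = 2*l \<longrightarrow> (\<forall>i<k. lab (i#x) = l)"
    using alt x unfolding alternating_labeling_def by blast
  consider "lab x = 0" | "lab x = 1" | "lab x = -1" | "lab x = 2" | "lab x = -2" using lx by auto
  then show ?thesis
  proof cases
    case 1
    then have c: "?c 0 = r" "?c 1 = (k-r) div 2" "?c (-1) = (k-r) div 2"
      using alt x unfolding alternating_labeling_def by auto
    have s: "(\<Sum>l\<in>{0,1,-1::int}. ?c l) = k" using c ev rk by simp
    have cov: "\<forall>i<k. ?\<phi> i \<in> {0,1,-1}" using cover[of "{0,1,-1::int}" k ?\<phi>] s by auto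
    have "(\<Sum>i<k. g (?\<phi> i)) = (\<Sum>l\<in>{0,1,-1::int}. real (?c l) * g l)"
      by (rule group_sum[OF cov]) simp
    also have "\<dots> = Tg k q r g (lab x)" using 1 c by (simp add: Tg_def algebra_simps)
    finally show ?thesis using cov by auto
  next
    case 2
    then have c: "?c 2 = q" "?c 0 = k - q" using A by auto
    have s: "(\<Sum>l\<in>{2,0::int}. ?c l) = k" using c qk by simp
    have cov: "\<forall>i<k. ?\<phi> i \<in> {2,0}" using cover[of "{2,0::int}" k ?\<phi>] s by auto
    have "(\<Sum>i<k. g (?\<phi> i)) = (\<Sum>l\<in>{2,0::int}. real (?c l) * g l)"
      by (rule group_sum[OF cov]) simp
    also have "\<dots> = Tg k q r g (lab x)" using 2 c qk by (simp add: Tg_def algebra_simps)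
    finally show ?thesis using cov by auto
  next
    case 3
    then have c: "?c (-2) = q" "?c 0 = k - q" using A by auto
    have s: "(\<Sum>l\<in>{-2,0::int}. ?c l) = k" using c qk by simp
    have cov: "\<forall>i<k. ?\<phi> i \<in> {-2,0}" using cover[of "{-2,0::int}" k ?\<phi>] s by auto
    have "(\<Sum>i<k. g (?\<phi> i)) = (\<Sum>l\<in>{-2,0::int}. real (?c l) * g l)"
      by (rule group_sum[OF cov]) simp
    also have "\<dots> = Tg k q r g (lab x)" using 3 c qk by (simp add: Tg_def algebra_simps)
    finally show ?thesis using cov by auto
  next
    case 4
    then have cov: "\<forall>i<k. ?\<phi> i = 1" using B by force
    then show ?thesis using 4 by (simp add: Tg_def)
  next
    case 5
    then have cov: "\<forall>i<k. ?\<phi> i = -1" using B by force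
    then show ?thesis using 5 by (simp add: Tg_def)
  qed
qed

lemma lab_range:
  assumes alt: "alternating_labeling k q r lab" and rk: "r \<le> k" "r mod 2 = k mod 2" and qk: "q \<le> k"
  shows "x \<in> htV k \<Longrightarrow> lab x \<in> {-2,-1,0,1,2}"
proof (induction x)
  case Nil then show ?case using alt by (simp add: alternating_labeling_def)
next
  case (Cons i x)
  then have "x \<in> htV k" "i < k" by (auto simp: htV_def)
  then show ?case using children[OF alt rk qk, of x] Cons by auto
qed

lemma htWn_htV: "x \<in> htWn k n \<Longrightarrow> x \<in> htV k" by (simp add: htWn_def)

lemma level_rec:
  assumes alt: "alternating_labeling k q r lab" and rk: "r \<le> k" "r mod 2 = k mod 2" and qk: "q \<le> k"
  shows "(\<Sum>y\<in>htWn k (Suc j). g (lab y)) = (\<Sum>x\<in>htWn k j. Tg k q r g (lab x))"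
  unfolding sum_htWn_Suc
proof (intro sum.cong refl)
  fix x assume "x \<in> htWn k j"
  then have x: "x \<in> htV k" by (rule htWn_htV)
  show "(\<Sum>i<k. g (lab (i # x))) = Tg k q r g (lab x)"
    using children[OF alt rk qk x lab_range[OF alt rk qk x]] by simp
qed

lemma fe_formula:
  assumes beta: "beta > 0" and fixp: "\<forall>x\<in>htV k. h x = (\<Sum>i<k. ff beta J (h (i#x)))"
  shows "free_energy k beta J n h =
    ((\<Sum>j\<in>{1..n}. \<Sum>y\<in>htWn k j. afun beta J (h y)) - ln (Zn k beta J 0 h) / beta) / (\<Sum>j\<le>n. real k ^ j)"
proof -
  have lnZ: "ln (Zn k beta J n h) = ln (Zn k beta J 0 h) - beta * (\<Sum>j\<in>{1..n}. \<Sum>y\<in>htWn k j. afun beta J (h y))"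
  proof (induction n)
    case 0 then show ?case by simp
  next
    case (Suc n)
    have fp: "\<forall>x\<in>htWn k n. h x = (\<Sum>i<k. ff beta J (h (i#x)))" using fixp htWn_htV by blast
    have "Zn k beta J (Suc n) h = exp (\<Sum>y\<in>htWn k (Suc n). - beta * afun beta J (h y)) * Zn k beta J n h"
      unfolding Zn_Suc[OF beta fp] by (simp add: exp_sum finite_htWn)
    then have "ln (Zn k beta J (Suc n) h) = (\<Sum>y\<in>htWn k (Suc n). - beta * afun beta J (h y)) + ln (Zn k beta J n h)"
      using Zn_pos[of k beta J n h] by (simp add: ln_mult)
    also have "\<dots> = ln (Zn k beta J 0 h) - beta * (\<Sum>j\<in>{1..Suc n}. \<Sum>y\<in>htWn k j. afun beta J (h y))"
    proof -
      have neg: "(\<Sum>y\<in>htWn k (Suc n). - beta * afun beta J (h y)) = - beta * (\<Sum>y\<in>htWn k (Suc n). afun beta J (h y))"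
        by (simp add: sum_distrib_left)
      have sp: "(\<Sum>j\<in>{1..Suc n}. \<Sum>y\<in>htWn k j. afun beta J (h y)) =
          (\<Sum>j\<in>{1..n}. \<Sum>y\<in>htWn k j. afun beta J (h y)) + (\<Sum>y\<in>htWn k (Suc n). afun beta J (h y))"
        by simp
      show ?thesis unfolding neg sp Suc by (simp add: algebra_simps)
    qed
    finally show ?case .
  qed
  have card: "real (card (htVn k n)) = (\<Sum>j\<le>n. real k ^ j)" by (simp add: card_htVn)
  show ?thesis unfolding free_energy_def lnZ card using beta by (simp add: field_simps)
qed

definition ind0 :: "int \<Rightarrow> real" where "ind0 l = (if l = 0 then 1 else 0)"
definition ind1 :: "int \<Rightarrow> real" where "ind1 l = (if l = 1 \<or> l = -1 then 1 else 0)"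
definition ind2 :: "int \<Rightarrow> real" where "ind2 l = (if l = 2 \<or> l = -2 then 1 else 0)"

lemma Tg_ind0: "l \<in> {-2,-1,0,1,2} \<Longrightarrow> q \<le> k \<Longrightarrow> Tg k q r ind0 l = real r * ind0 l + (real k - real q) * ind1 l"
  by (auto simp: Tg_def ind0_def ind1_def)
lemma Tg_ind1: "l \<in> {-2,-1,0,1,2} \<Longrightarrow> r \<le> k \<Longrightarrow> r mod 2 = k mod 2 \<Longrightarrow>
    Tg k q r ind1 l = (real k - real r) * ind0 l + real k * ind2 l"
proof -
  assume a: "l \<in> {-2,-1,0,1,2}" "r \<le> k" "r mod 2 = k mod 2"
  have "(k - r) div 2 + (k - r) div 2 = k - r" using a by presburger
  then have "real ((k - r) div 2) * 2 = real k - real r" using a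
    by (metis mult_2_right of_nat_add of_nat_diff of_nat_mult of_nat_numeral)
  then show ?thesis using a by (auto simp: Tg_def ind0_def ind1_def ind2_def)
qed
lemma Tg_ind2: "l \<in> {-2,-1,0,1,2} \<Longrightarrow> Tg k q r ind2 l = real q * ind1 l"
  by (auto simp: Tg_def ind1_def ind2_def)

lemma geom_le:
  fixes \<rho> :: real assumes "\<rho> > 1"
  shows "(\<Sum>j\<le>n. \<rho>^j) \<le> \<rho>^(Suc n) / (\<rho> - 1)"
proof -
  have "(\<Sum>j\<le>n. \<rho>^j) = (\<Sum>j<Suc n. \<rho>^j)" by (simp only: lessThan_Suc_atMost)
  also have "\<dots> = (1 - \<rho>^(Suc n)) / (1 - \<rho>)" using assms by (subst sum_gp_strict) auto
  also have "\<dots> = (\<rho>^(Suc n) - 1) / (\<rho> - 1)" using assms by (simp add: field_simps)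
  also have "\<dots> \<le> \<rho>^(Suc n) / (\<rho> - 1)" using assms by (simp add: divide_right_mono)
  finally show ?thesis .
qed

lemma case_a_abstract:
  fixes k q r :: nat and N0 N1 N2 :: "nat \<Rightarrow> real" and K a0 a1 a2 :: real
  assumes k2: "k \<ge> 2" and q1: "1 \<le> q" and qk: "q \<le> k - 1" and r1: "1 \<le> r" and rk: "r \<le> k"
    and R0: "\<And>j. N0 (Suc j) = real r * N0 j + (real k - real q) * N1 j"
    and R1: "\<And>j. N1 (Suc j) = (real k - real r) * N0 j + real k * N2 j"
    and R2: "\<And>j. N2 (Suc j) = real q * N1 j"
    and S: "\<And>j. N0 j + N1 j + N2 j = real k ^ j"
  shows "(\<lambda>n. ((\<Sum>j\<in>{1..n}. N0 j * a0 + N1 j * a1 + N2 j * a2) + K) / (\<Sum>j\<le>n. real k ^ j))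
     \<longlonglongrightarrow> (real k * (real k - real q) * a0 + real k * (real k - real r) * a1
          + real q * (real k - real r) * a2) / (2 * real k ^ 2 - real r * real k - real r * real q)"
proof -
  define D where "D = 2 * real k ^ 2 - real r * real k - real r * real q"
  define L where "L = (real k * (real k - real q) * a0 + real k * (real k - real r) * a1
          + real q * (real k - real r) * a2) / D"
  define c where "c = real k * (real k - real r) / D"
  define e where "e = (\<lambda>j. N1 j - c * real k ^ j)"
  have kpos: "real k \<ge> 2" using k2 by simp
  have qk': "real q \<le> real k - 1" using qk k2 by linarith
  have rk': "real r \<le> real k" "real r \<ge> 1" using rk r1 by simp_all
  have q1': "real q \<ge> 1" using q1 by simp
  have Dpos: "D > 0"
  proof -
    have "D = real k * (real k - real r) + real k * (real k - real q) + real q * (real k - real r)"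
      by (simp add: D_def power2_eq_square algebra_simps)
    moreover have "real k * (real k - real q) > 0" using qk' kpos by simp
    moreover have "real k * (real k - real r) \<ge> 0" "real q * (real k - real r) \<ge> 0" using rk' kpos q1' by simp_all
    ultimately show ?thesis by linarith
  qed
  have cD: "c * (real k ^ 2 + (real k - real r) * real k - real r * real q) = (real k - real r) * real k"
    using Dpos by (simp add: c_def D_def power2_eq_square field_simps)
  have N2s: "N2 (Suc j) = real q * N1 j" for j by (rule R2)
  have erec: "e (Suc (Suc j)) = - (real k - real r) * e (Suc j) + real r * real q * e j" for j
  proof -
    have "N1 (Suc (Suc j)) = (real k - real r) * (real k ^ Suc j - N1 (Suc j) - N2 (Suc j)) + real k * N2 (Suc j)"
    proof -
      have "N0 (Suc j) = real k ^ Suc j - N1 (Suc j) - N2 (Suc j)" using S[of "Suc j"] by linarith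
      then show ?thesis using R1[of "Suc j"] by simp
    qed
    also have "\<dots> = (real k - real r) * real k ^ Suc j - (real k - real r) * N1 (Suc j) + real r * real q * N1 j"
      by (simp add: N2s algebra_simps)
    finally have 1: "N1 (Suc (Suc j)) = (real k - real r) * real k ^ Suc j - (real k - real r) * N1 (Suc j) + real r * real q * N1 j" .
    have 2: "c * real k ^ Suc (Suc j) = (real k - real r) * real k ^ Suc j - (real k - real r) * (c * real k ^ Suc j) + real r * real q * (c * real k ^ j)"
    proof -
      have "c * real k ^ Suc (Suc j) = c * (real k ^ 2 + (real k - real r) * real k - real r * real q) * real k ^ j
         - c * ((real k - real r) * real k - real r * real q) * real k ^ j"
        by (simp add: power2_eq_square algebra_simps)
      also have "\<dots> = (real k - real r) * real k * real k ^ j - c * ((real k - real r) * real k - real r * real q) * real k ^ j"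
        by (simp only: cD)
      finally show ?thesis by (simp add: algebra_simps)
    qed
    show ?thesis unfolding e_def using 1 2 by (simp add: algebra_simps)
  qed
  define \<alpha> where "\<alpha> = real r - real r / (2 * real k)"
  define \<rho> where "\<rho> = real k - real r / (2 * real k)"
  have rr: "real r / (2 * real k) \<le> 1/2" using rk' kpos by (simp add: field_simps)
  have rr0: "real r / (2 * real k) > 0" using rk' kpos by simp
  have \<alpha>0: "\<alpha> \<ge> 0" unfolding \<alpha>_def using rr rk' by linarith
  have \<rho>1: "\<rho> > 1" unfolding \<rho>_def using rr kpos by linarith
  have \<rho>k: "\<rho> < real k" unfolding \<rho>_def using rr0 by linarith
  have key: "real r * real q \<le> \<rho> * \<alpha>"
  proof -
    have "\<rho> * \<alpha> = real r * ((real k - real r / (2 * real k)) * (1 - 1 / (2 * real k)))"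
      unfolding \<rho>_def \<alpha>_def using kpos by (simp add: field_simps)
    moreover have "(real k - real r / (2 * real k)) * (1 - 1 / (2 * real k)) \<ge> real q"
    proof -
      have "(real k - real r / (2 * real k)) \<ge> real k - 1/2" using rr by linarith
      moreover have "1 - 1 / (2 * real k) \<ge> 0" using kpos by (simp add: field_simps)
      ultimately have "(real k - real r / (2 * real k)) * (1 - 1 / (2 * real k)) \<ge> (real k - 1/2) * (1 - 1 / (2 * real k))"
        by (intro mult_right_mono) auto
      moreover have "(real k - 1/2) * (1 - 1 / (2 * real k)) = real k - 1 + 1 / (4 * real k)"
        using kpos by (simp add: field_simps)
      moreover have "1 / (4 * real k) > 0" using kpos by simp
      ultimately show ?thesis using qk' by linarith
    qed
    ultimately show ?thesis using rk' by (simp add: mult_left_mono)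
  qed
  define V where "V = (\<lambda>j. \<bar>e (Suc j)\<bar> + \<alpha> * \<bar>e j\<bar>)"
  have Vstep: "V (Suc j) \<le> \<rho> * V j" for j
  proof -
    have "\<bar>e (Suc (Suc j))\<bar> \<le> (real k - real r) * \<bar>e (Suc j)\<bar> + real r * real q * \<bar>e j\<bar>"
    proof -
      have "\<bar>- (real k - real r) * e (Suc j) + real r * real q * e j\<bar> \<le> \<bar>- (real k - real r) * e (Suc j)\<bar> + \<bar>real r * real q * e j\<bar>"
        by (rule abs_triangle_ineq)
      also have "\<dots> = (real k - real r) * \<bar>e (Suc j)\<bar> + real r * real q * \<bar>e j\<bar>"
        using rk' by (simp add: abs_mult)
      finally show ?thesis using erec[of j] by simp
    qed
    moreover have "real r * real q * \<bar>e j\<bar> \<le> \<rho> * \<alpha> * \<bar>e j\<bar>" using key by (simp add: mult_right_mono)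
    moreover have "\<rho> = real k - real r + \<alpha>" by (simp add: \<rho>_def \<alpha>_def)
    then have "\<rho> * (\<bar>e (Suc j)\<bar> + \<alpha> * \<bar>e j\<bar>) = (real k - real r) * \<bar>e (Suc j)\<bar> + \<alpha> * \<bar>e (Suc j)\<bar> + \<rho> * \<alpha> * \<bar>e j\<bar>"
      by (simp only: distrib_left distrib_right)
    ultimately show ?thesis unfolding V_def by linarith
  qed
  have Vb: "V j \<le> \<rho>^j * V 0" for j
  proof (induction j)
    case 0 then show ?case by simp
  next
    case (Suc j)
    have "V (Suc j) \<le> \<rho> * V j" by (rule Vstep)
    also have "\<dots> \<le> \<rho> * (\<rho>^j * V 0)" using Suc \<rho>1 by simp
    finally show ?case by simp
  qed
  define M where "M = max \<bar>e 0\<bar> (V 0 / \<rho>)"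
  have eb: "\<bar>e j\<bar> \<le> M * \<rho>^j" for j
  proof (cases j)
    case 0 then show ?thesis by (simp add: M_def)
  next
    case (Suc i)
    have "\<bar>e (Suc i)\<bar> \<le> V i" unfolding V_def using \<alpha>0 by simp
    also have "\<dots> \<le> \<rho>^i * V 0" by (rule Vb)
    also have "\<dots> = (V 0 / \<rho>) * \<rho>^(Suc i)" using \<rho>1 by simp
    also have "\<dots> \<le> M * \<rho>^(Suc i)" unfolding M_def using \<rho>1 by (intro mult_right_mono) auto
    finally show ?thesis using Suc by simp
  qed
  have M0: "M \<ge> 0" unfolding M_def by simp
  define d where "d = (\<lambda>j. e j * (a1 - a0) + real q * e (j - 1) * (a2 - a0))"
  have Lc: "L = a0 + c * (a1 - a0) + real q * c / real k * (a2 - a0)"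
  proof -
    have cD': "c * D = real k * (real k - real r)" using Dpos by (simp add: c_def)
    have "D * (a0 + c * (a1 - a0) + real q * c / real k * (a2 - a0))
        = a0 * D + (c * D) * (a1 - a0) + real q * (c * D) / real k * (a2 - a0)"
      by (simp add: algebra_simps)
    also have "\<dots> = a0 * D + real k * (real k - real r) * (a1 - a0) + real q * (real k - real r) * (a2 - a0)"
      unfolding cD' using kpos by simp
    also have "\<dots> = real k * (real k - real q) * a0 + real k * (real k - real r) * a1
          + real q * (real k - real r) * a2"
      unfolding D_def by (simp add: power2_eq_square algebra_simps)
    finally show ?thesis unfolding L_def using Dpos by (simp add: field_simps)
  qed
  have Aj: "N0 j * a0 + N1 j * a1 + N2 j * a2 = L * real k ^ j + d j" if j1: "j \<ge> 1" for j
  proof -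
    obtain i where j: "j = Suc i" using j1 by (cases j) auto
    have "N0 j * a0 + N1 j * a1 + N2 j * a2 = real k ^ j * a0 + N1 j * (a1 - a0) + N2 j * (a2 - a0)"
    proof -
      have "real k ^ j = N0 j + N1 j + N2 j" using S[of j] by simp
      then show ?thesis by (simp only:) (simp add: algebra_simps)
    qed
    also have "\<dots> = real k ^ j * a0 + (c * real k ^ j + e j) * (a1 - a0) + real q * (c * real k ^ i + e i) * (a2 - a0)"
      unfolding j e_def by (simp add: R2)
    also have "\<dots> = L * real k ^ j + d j"
      unfolding Lc d_def j using kpos by (simp add: field_simps)
    finally show ?thesis .
  qed
  define M' where "M' = M * (\<bar>a1 - a0\<bar> + real q * \<bar>a2 - a0\<bar> / \<rho>)"
  have M'0: "M' \<ge> 0" unfolding M'_def using M0 \<rho>1 by simp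
  have db: "\<bar>d j\<bar> \<le> M' * \<rho>^j" if j1: "j \<ge> 1" for j
  proof -
    obtain i where j: "j = Suc i" using j1 by (cases j) auto
    have "\<bar>d j\<bar> \<le> \<bar>e j\<bar> * \<bar>a1 - a0\<bar> + real q * \<bar>e i\<bar> * \<bar>a2 - a0\<bar>"
      unfolding d_def j by (rule order.trans[OF abs_triangle_ineq]) (simp add: abs_mult)
    also have "\<dots> \<le> M * \<rho>^j * \<bar>a1 - a0\<bar> + real q * (M * \<rho>^i) * \<bar>a2 - a0\<bar>"
      using eb[of j] eb[of i] by (intro add_mono mult_right_mono mult_left_mono) auto
    also have "\<dots> = M' * \<rho>^j" unfolding M'_def j using \<rho>1 by (simp add: field_simps)
    finally show ?thesis .
  qed
  define T where "T = (\<lambda>n. \<Sum>j\<le>n. real k ^ j)"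
  have Tge: "T n \<ge> real k ^ n" for n unfolding T_def
    by (rule member_le_sum) auto
  have Tpos: "T n > 0" for n
  proof -
    have "real k ^ n > 0" using kpos by simp
    then show ?thesis using Tge[of n] by linarith
  qed
  have T1: "(\<Sum>j\<in>{1..n}. real k ^ j) = T n - 1" for n
  proof -
    have "{..n} = insert 0 {1..n}" by auto
    then show ?thesis unfolding T_def by simp
  qed
  define B where "B = M' * \<rho> / (\<rho> - 1) + \<bar>K - L\<bar>"
  have main: "((\<Sum>j\<in>{1..n}. N0 j * a0 + N1 j * a1 + N2 j * a2) + K) / T n
      = L + ((\<Sum>j\<in>{1..n}. d j) + (K - L)) / T n" for n
  proof -
    have "(\<Sum>j\<in>{1..n}. N0 j * a0 + N1 j * a1 + N2 j * a2) = (\<Sum>j\<in>{1..n}. L * real k ^ j + d j)"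
      by (intro sum.cong refl Aj) auto
    also have "\<dots> = L * (\<Sum>j\<in>{1..n}. real k ^ j) + (\<Sum>j\<in>{1..n}. d j)"
      by (simp add: sum.distrib sum_distrib_left)
    also have "\<dots> = L * (T n - 1) + (\<Sum>j\<in>{1..n}. d j)"
      by (simp only: T1)
    finally show ?thesis using Tpos[of n] by (simp add: field_simps)
  qed
  have bound: "norm (((\<Sum>j\<in>{1..n}. d j) + (K - L)) / T n) \<le> B * (\<rho> / real k)^n" for n
  proof -
    have "\<bar>\<Sum>j\<in>{1..n}. d j\<bar> \<le> (\<Sum>j\<in>{1..n}. M' * \<rho>^j)"
      by (rule order.trans[OF sum_abs]) (intro sum_mono db, auto)
    also have "\<dots> \<le> (\<Sum>j\<le>n. M' * \<rho>^j)"
      using M'0 \<rho>1 by (intro sum_mono2) auto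
    also have "\<dots> = M' * (\<Sum>j\<le>n. \<rho>^j)" by (simp add: sum_distrib_left)
    also have "\<dots> \<le> M' * (\<rho>^(Suc n) / (\<rho> - 1))" using M'0 geom_le[OF \<rho>1] by (rule mult_left_mono[rotated])
    finally have s1: "\<bar>\<Sum>j\<in>{1..n}. d j\<bar> \<le> M' * \<rho> / (\<rho> - 1) * \<rho>^n" by (simp add: field_simps)
    have s2: "\<bar>K - L\<bar> \<le> \<bar>K - L\<bar> * \<rho>^n" using \<rho>1 by (simp add: mult_le_cancel_left1 one_le_power)
    have Bs: "B * \<rho>^n = M' * \<rho> / (\<rho> - 1) * \<rho>^n + \<bar>K - L\<bar> * \<rho>^n"
      unfolding B_def by (simp add: algebra_simps)
    have "\<bar>(\<Sum>j\<in>{1..n}. d j) + (K - L)\<bar> \<le> B * \<rho>^n"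
      using s1 s2 abs_triangle_ineq[of "\<Sum>j\<in>{1..n}. d j" "K - L"] unfolding Bs by linarith
    moreover have "B \<ge> 0" unfolding B_def using M'0 \<rho>1 by simp
    ultimately have "\<bar>(\<Sum>j\<in>{1..n}. d j) + (K - L)\<bar> / T n \<le> B * \<rho>^n / real k ^ n"
    proof -
      have kn: "real k ^ n > 0" using kpos by simp
      have "\<bar>(\<Sum>j\<in>{1..n}. d j) + (K - L)\<bar> / T n \<le> \<bar>(\<Sum>j\<in>{1..n}. d j) + (K - L)\<bar> / real k ^ n"
        using Tge[of n] kn Tpos[of n] by (intro divide_left_mono) auto
      also have "\<dots> \<le> B * \<rho>^n / real k ^ n"
        using kn \<open>\<bar>(\<Sum>j\<in>{1..n}. d j) + (K - L)\<bar> \<le> B * \<rho>^n\<close> by (intro divide_right_mono) auto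
      finally show ?thesis .
    qed
    then show ?thesis using Tpos[of n] by (simp add: power_divide)
  qed
  have lim0: "(\<lambda>n. B * (\<rho> / real k)^n) \<longlonglongrightarrow> 0"
    using \<rho>1 \<rho>k by (intro tendsto_mult_right_zero LIMSEQ_power_zero) auto
  have "(\<lambda>n. ((\<Sum>j\<in>{1..n}. d j) + (K - L)) / T n) \<longlonglongrightarrow> 0"
  proof (rule tendsto_0_le[OF lim0, where K=1])
    have "norm (((\<Sum>j\<in>{1..n}. d j) + (K - L)) / T n) \<le> norm (B * (\<rho> / real k)^n) * 1" for n
      using order_trans[OF bound[of n] abs_ge_self[of "B * (\<rho> / real k)^n"]] by simp
    then show "\<forall>\<^sub>F n in sequentially. norm (((\<Sum>j\<in>{1..n}. d j) + (K - L)) / T n) \<le> norm (B * (\<rho> / real k)^n) * 1"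
      by (intro always_eventually allI)
  qed
  then have "(\<lambda>n. L + ((\<Sum>j\<in>{1..n}. d j) + (K - L)) / T n) \<longlonglongrightarrow> L + 0"
    by (intro tendsto_add) auto
  then have lim: "(\<lambda>n. L + ((\<Sum>j\<in>{1..n}. d j) + (K - L)) / T n) \<longlonglongrightarrow> L" by simp
  have eq: "(\<lambda>n. ((\<Sum>j\<in>{1..n}. N0 j * a0 + N1 j * a1 + N2 j * a2) + K) / (\<Sum>j\<le>n. real k ^ j))
      = (\<lambda>n. L + ((\<Sum>j\<in>{1..n}. d j) + (K - L)) / T n)"
  proof (rule ext)
    fix n show "((\<Sum>j\<in>{1..n}. N0 j * a0 + N1 j * a1 + N2 j * a2) + K) / (\<Sum>j\<le>n. real k ^ j)
      = L + ((\<Sum>j\<in>{1..n}. d j) + (K - L)) / T n"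
      using main[of n] unfolding T_def .
  qed
  have "(\<lambda>n. ((\<Sum>j\<in>{1..n}. N0 j * a0 + N1 j * a1 + N2 j * a2) + K) / (\<Sum>j\<le>n. real k ^ j)) \<longlonglongrightarrow> L"
    unfolding eq by (rule lim)
  then show ?thesis unfolding L_def D_def .
qed

lemma ratio_lim:
  fixes K U V W X :: real
  assumes "K > 1" "W \<noteq> 0"
  shows "(\<lambda>m. (U * K^m + V) / (W * K^m + X)) \<longlonglongrightarrow> U / W"
proof -
  have eq: "(U * K^m + V) / (W * K^m + X) = (U + V * (1/K)^m) / (W + X * (1/K)^m)" for m
  proof -
    have Km: "K^m \<noteq> 0" using assms by simp
    have "(U + V * (1/K)^m) / (W + X * (1/K)^m) = (K^m * (U + V * (1/K)^m)) / (K^m * (W + X * (1/K)^m))"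
      using Km by (rule mult_divide_mult_cancel_left[symmetric])
    also have "K^m * (U + V * (1/K)^m) = U * K^m + V" using Km by (simp add: algebra_simps power_one_over)
    also have "K^m * (W + X * (1/K)^m) = W * K^m + X" using Km by (simp add: algebra_simps power_one_over)
    finally show ?thesis by simp
  qed
  have z: "(\<lambda>m. (1/K)^m) \<longlonglongrightarrow> 0" using assms by (intro LIMSEQ_power_zero) auto
  have "(\<lambda>m. (U + V * (1/K)^m) / (W + X * (1/K)^m)) \<longlonglongrightarrow> (U + V * 0) / (W + X * 0)"
    using assms z by (intro tendsto_intros) auto
  then show ?thesis unfolding eq by simp
qed

lemma aux1: "(a::real) \<noteq> 0 \<Longrightarrow> b \<noteq> 0 \<Longrightarrow> c \<noteq> 0 \<Longrightarrow> x / (a*b) / (c/a) = x / (c*b)"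
  by (simp add: field_simps)
lemma aux2: "(a::real) \<noteq> 0 \<Longrightarrow> b \<noteq> 0 \<Longrightarrow> c \<noteq> 0 \<Longrightarrow> (x / (a*b) + y) / (c/a) = x / (c*b) + y * a / c"
  by (simp add: field_simps)

lemma geom_sum_real:
  fixes x :: real assumes "x \<noteq> 1"
  shows "(\<Sum>j\<le>n. x^j) = (x^(Suc n) - 1) / (x - 1)"
proof -
  have "(\<Sum>j\<le>n. x^j) = (\<Sum>j<Suc n. x^j)" by (simp only: lessThan_Suc_atMost)
  also have "\<dots> = (1 - x^(Suc n)) / (1 - x)" using assms by (subst sum_gp_strict) auto
  also have "\<dots> = (x^(Suc n) - 1) / (x - 1)" using assms by (simp add: field_simps)
  finally show ?thesis .
qed

lemma sum_1_n_shift: "(\<Sum>j\<in>{1..n}. f j) = (\<Sum>j<n. f (Suc j) :: real)"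
  by (induction n) (auto simp: atLeastAtMostSuc_conv)

lemma case_b_generic:
  fixes k :: nat and A :: "nat \<Rightarrow> real" and \<alpha> \<beta> K0 :: real
  assumes k2: "k \<ge> 2"
    and A1: "\<And>i. A (Suc (2*i)) = \<alpha> * (real k ^ 2) ^ i"
    and A2: "\<And>i. A (Suc (Suc (2*i))) = \<beta> * (real k ^ 2) ^ i"
  shows "(\<lambda>m. ((\<Sum>j\<in>{1..2*m}. A j) + K0) / (\<Sum>j\<le>2*m. real k ^ j))
           \<longlonglongrightarrow> (\<alpha> + \<beta>) / (real k * (real k + 1))"
    and "(\<lambda>m. ((\<Sum>j\<in>{1..2*m+1}. A j) + K0) / (\<Sum>j\<le>2*m+1. real k ^ j))
           \<longlonglongrightarrow> (\<alpha> + \<beta>) / (real k ^ 2 * (real k + 1)) + \<alpha> * (real k - 1) / real k ^ 2"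
proof -
  define K where "K = real k ^ 2"
  have kpos: "real k \<ge> 2" using k2 by simp
  have K1: "K > 1" unfolding K_def using kpos
    by (metis less_le_trans one_less_numeral_iff one_less_power power2_eq_square pos2 semiring_norm(76) self_le_power zero_less_numeral) 
  have Kne: "K \<noteq> 1" "1 + K * K \<noteq> K * 2"
  proof -
    have "(K - 1) * (K - 1) > 0" using K1 by simp
    then show "K \<noteq> 1" "1 + K * K \<noteq> K * 2" by (auto simp: algebra_simps)
  qed
  have k1: "real k - 1 \<noteq> 0" "real k \<noteq> 1" using kpos by auto
  have Ev: "(\<Sum>j<2*m. A (Suc j)) = (\<alpha> + \<beta>) * (K^m - 1) / (K - 1)" for m
  proof (induction m)
    case 0 then show ?case by simp
  next
    case (Suc m)
    have "(\<Sum>j<2*Suc m. A (Suc j)) = (\<Sum>j<2*m. A (Suc j)) + A (Suc (2*m)) + A (Suc (Suc (2*m)))"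
      by (simp add: mult_2)
    also have "\<dots> = (\<alpha> + \<beta>) * (K^m - 1) / (K - 1) + (\<alpha> + \<beta>) * K^m"
      using Suc A1[of m] A2[of m] by (simp add: K_def algebra_simps)
    also have "\<dots> = (\<alpha> + \<beta>) * (K^Suc m - 1) / (K - 1)" using K1 by (simp add: field_simps)
    finally show ?case .
  qed
  have Kf: "K - 1 = (real k - 1) * (real k + 1)" by (simp add: K_def power2_eq_square algebra_simps)
  have kne: "real k \<noteq> 0" "real k + 1 \<noteq> 0" "real k - 1 \<noteq> 0" using kpos by auto
  have T: "(\<Sum>j\<le>n. real k ^ j) = (real k ^ Suc n - 1) / (real k - 1)" for n
    using k1 by (simp add: geom_sum_real)
  have kK: "real k ^ (2*m) = K^m" for m by (simp add: K_def power_mult)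
  show "(\<lambda>m. ((\<Sum>j\<in>{1..2*m}. A j) + K0) / (\<Sum>j\<le>2*m. real k ^ j))
           \<longlonglongrightarrow> (\<alpha> + \<beta>) / (real k * (real k + 1))"
  proof -
    define U where "U = (\<alpha> + \<beta>) / (K - 1)"
    define W where "W = real k / (real k - 1)"
    have eq: "((\<Sum>j\<in>{1..2*m}. A j) + K0) / (\<Sum>j\<le>2*m. real k ^ j)
       = (U * K^m + (K0 - U)) / (W * K^m + (- 1 / (real k - 1)))" for m
    proof -
      have "(\<Sum>j\<in>{1..2*m}. A j) + K0 = U * K^m + (K0 - U)"
        unfolding sum_1_n_shift Ev U_def using Kne by (simp add: divide_simps algebra_simps)
      moreover have "(\<Sum>j\<le>2*m. real k ^ j) = W * K^m + (- 1 / (real k - 1))"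
      proof -
        have "real k ^ Suc (2*m) = real k * K^m" using kK[of m] by simp
        then show ?thesis unfolding T W_def by (simp add: diff_divide_distrib)
      qed
      ultimately show ?thesis by simp
    qed
    have W0: "W \<noteq> 0" unfolding W_def using kpos by simp
    have "U / W = (\<alpha> + \<beta>) / (real k * (real k + 1))"
      unfolding U_def W_def Kf using kne by (intro aux1) auto
    then show ?thesis unfolding eq using ratio_lim[OF K1 W0, of U "K0 - U" "- 1 / (real k - 1)"] by simp
  qed
  show "(\<lambda>m. ((\<Sum>j\<in>{1..2*m+1}. A j) + K0) / (\<Sum>j\<le>2*m+1. real k ^ j))
           \<longlonglongrightarrow> (\<alpha> + \<beta>) / (real k ^ 2 * (real k + 1)) + \<alpha> * (real k - 1) / real k ^ 2"
  proof -
    define U where "U = (\<alpha> + \<beta>) / (K - 1) + \<alpha>"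
    define W where "W = K / (real k - 1)"
    have eq: "((\<Sum>j\<in>{1..2*m+1}. A j) + K0) / (\<Sum>j\<le>2*m+1. real k ^ j)
       = (U * K^m + (K0 - (\<alpha> + \<beta>) / (K - 1))) / (W * K^m + (- 1 / (real k - 1)))" for m
    proof -
      have "(\<Sum>j\<in>{1..2*m+1}. A j) = (\<Sum>j<2*m. A (Suc j)) + A (Suc (2*m))"
        unfolding sum_1_n_shift by simp
      also have "\<dots> = (\<alpha> + \<beta>) * (K^m - 1) / (K - 1) + \<alpha> * K^m"
        unfolding Ev A1 K_def ..
      finally have "(\<Sum>j\<in>{1..2*m+1}. A j) + K0 = U * K^m + (K0 - (\<alpha> + \<beta>) / (K - 1))"
        unfolding U_def by (simp add: diff_divide_distrib algebra_simps)
      moreover have "(\<Sum>j\<le>2*m+1. real k ^ j) = W * K^m + (- 1 / (real k - 1))"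
      proof -
        have "real k ^ Suc (2*m+1) = K * K^m" by (simp add: K_def power_mult[symmetric] power_add[symmetric])
        then show ?thesis unfolding T W_def by (simp add: diff_divide_distrib)
      qed
      ultimately show ?thesis by simp
    qed
    have W0: "W \<noteq> 0" unfolding W_def K_def using kpos by simp
    have "U / W = (\<alpha> + \<beta>) / (real k ^ 2 * (real k + 1)) + \<alpha> * (real k - 1) / real k ^ 2"
      unfolding U_def W_def Kf using kne K1 by (subst aux2) (auto simp: K_def)
    then show ?thesis unfolding eq using ratio_lim[OF K1 W0, of U _ "- 1 / (real k - 1)"] by simp
  qed
qed

lemma abs_tanh_lt1: "\<bar>tanh (x::real)\<bar> < 1"
  using tanh_real_lt_1[of x] tanh_real_gt_neg1[of x] by auto

lemma ff_0: "ff beta J 0 = 0" by (simp add: ff_def)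
lemma ff_neg: "ff beta J (- t) = - ff beta J t"
proof -
  have "\<bar>tanh (beta * J) * tanh t\<bar> < 1"
    using abs_tanh_lt1[of "beta*J"] abs_tanh_lt1[of t]
    by (simp add: abs_mult) (metis abs_ge_zero abs_mult_less mult.right_neutral)
  then show ?thesis unfolding ff_def by simp
qed

lemma afun_neg: "afun beta J (- t) = afun beta J t"
proof -
  have "cosh (- t + beta * J) = cosh (t - beta * J)" using cosh_minus[of "t - beta*J"] by simp
  moreover have "cosh (- t - beta * J) = cosh (t + beta * J)" using cosh_minus[of "t + beta*J"] by simp
  ultimately have e: "4 * cosh (- t + beta * J) * cosh (- t - beta * J) = 4 * cosh (t + beta * J) * cosh (t - beta * J)"
    by (simp only: mult.commute mult.left_commute)
  show ?thesis unfolding afun_def e by (rule refl)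
qed

lemma e1_aux: "(k::real) - q \<noteq> 0 \<Longrightarrow> k * (k - q) * ((k - r) / (k - q)) = k * (k - r)"
  by simp
lemma e2_aux: "(k::real) - q \<noteq> 0 \<Longrightarrow> k \<noteq> 0 \<Longrightarrow> k * (k - q) * (q * (k - r) / (k * (k - q))) = q * (k - r)"
  by simp
lemma gen_aux: "(c::real) * (a0 + x * a1 + y * a2) = c * a0 + (c * x) * a1 + (c * y) * a2"
  by (simp add: algebra_simps)

lemma v1: "(x::real) \<noteq> 0 \<Longrightarrow> x + 1 \<noteq> 0 \<Longrightarrow> (x * a1 + x * ((x - q) * a0 + q * a2)) / (x * (x + 1))
   = (x - q) / (x + 1) * a0 + 1 / (x + 1) * a1 + q / (x + 1) * a2"
  apply (simp add: divide_simps)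
  apply (simp add: algebra_simps)
  done
lemma v2: "(x::real) \<noteq> 0 \<Longrightarrow> x + 1 \<noteq> 0 \<Longrightarrow> (x * a1 + x * ((x - q) * a0 + q * a2)) / (x ^ 2 * (x + 1)) + x * a1 * (x - 1) / x ^ 2
   = (x - q) / (x * (x + 1)) * a0 + x / (x + 1) * a1 + q / (x * (x + 1)) * a2"
  apply (simp add: divide_simps)
  apply (simp add: algebra_simps power2_eq_square)
  done
lemma v3: "(x::real) \<noteq> 0 \<Longrightarrow> x + 1 \<noteq> 0 \<Longrightarrow> (((x - q) * a0 + q * a2) + x ^ 2 * a1) / (x * (x + 1))
   = (x - q) / (x * (x + 1)) * a0 + x / (x + 1) * a1 + q / (x * (x + 1)) * a2"
  apply (simp add: divide_simps)
  apply (simp add: algebra_simps power2_eq_square)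
  done
lemma v4: "(x::real) \<noteq> 0 \<Longrightarrow> x + 1 \<noteq> 0 \<Longrightarrow> (((x - q) * a0 + q * a2) + x ^ 2 * a1) / (x ^ 2 * (x + 1)) + ((x - q) * a0 + q * a2) * (x - 1) / x ^ 2
   = (x - q) / (x + 1) * a0 + 1 / (x + 1) * a1 + q / (x + 1) * a2"
  apply (simp add: divide_simps)
  apply (simp add: algebra_simps power2_eq_square)
  done

theorem proposition1:
  fixes k q r :: nat and beta J h1 h2 :: real
    and lab :: "nat list \<Rightarrow> int" and h :: "nat list \<Rightarrow> real"
  assumes "k \<ge> 2" and "1 \<le> q" and "q \<le> k - 1" and "r \<le> k" and "r mod 2 = k mod 2"
    and "beta > 0"
    and "h1 = real q * artanh (tanh (beta * J) * tanh h2)"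
    and "h2 = real k * artanh (tanh (beta * J) * tanh h1)"
    and "alternating_bc k q r h1 h2 lab h"
  shows
   "(r \<noteq> 0 \<longrightarrow>
      (\<lambda>n. free_energy k beta J n h) \<longlonglongrightarrow>
        real (k * (k - q)) / (2 * real k ^ 2 - real r * real k - real r * real q) *
          (afun beta J 0 + (real k - real r) / (real k - real q) * afun beta J h1
           + real q * (real k - real r) / (real k * (real k - real q)) * afun beta J h2))
    \<and> (r = 0 \<and> lab [] \<in> {0, 2, -2} \<longrightarrow>
      (\<lambda>m. free_energy k beta J (2 * m) h) \<longlonglongrightarrow>
        (real k - real q) / (real k + 1) * afun beta J 0 + 1 / (real k + 1) * afun beta J h1
        + real q / (real k + 1) * afun beta J h2
      \<and> (\<lambda>m. free_energy k beta J (2 * m + 1) h) \<longlonglongrightarrow>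
        (real k - real q) / (real k * (real k + 1)) * afun beta J 0 + real k / (real k + 1) * afun beta J h1
        + real q / (real k * (real k + 1)) * afun beta J h2)
    \<and> (r = 0 \<and> lab [] \<in> {1, -1} \<longrightarrow>
      (\<lambda>m. free_energy k beta J (2 * m) h) \<longlonglongrightarrow>
        (real k - real q) / (real k * (real k + 1)) * afun beta J 0 + real k / (real k + 1) * afun beta J h1
        + real q / (real k * (real k + 1)) * afun beta J h2
      \<and> (\<lambda>m. free_energy k beta J (2 * m + 1) h) \<longlonglongrightarrow>
        (real k - real q) / (real k + 1) * afun beta J 0 + 1 / (real k + 1) * afun beta J h1
        + real q / (real k + 1) * afun beta J h2)"
proof -
  note k2 = assms(1) and q1 = assms(2) and qk1 = assms(3) and rk = assms(4) and rmod = assms(5)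
    and beta = assms(6) and H1 = assms(7) and H2 = assms(8)
  have alt: "alternating_labeling k q r lab" and hv: "\<forall>x\<in>htV k. h x = bc_val h1 h2 (lab x)"
    using assms(9) by (auto simp: alternating_bc_def)
  have qk: "q \<le> k" using qk1 by simp
  have range: "lab x \<in> {-2,-1,0,1,2}" if "x \<in> htV k" for x
    using lab_range[OF alt rk rmod qk that] .
  have H1': "h1 = real q * ff beta J h2" using H1 by (simp add: ff_def)
  have H2': "h2 = real k * ff beta J h1" using H2 by (simp add: ff_def)
  have fixp: "\<forall>x\<in>htV k. h x = (\<Sum>i<k. ff beta J (h (i#x)))"
  proof
    fix x assume x: "x \<in> htV k"
    have "(\<Sum>i<k. ff beta J (h (i#x))) = (\<Sum>i<k. (\<lambda>l. ff beta J (bc_val h1 h2 l)) (lab (i#x)))"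
    proof (intro sum.cong refl)
      fix i assume "i \<in> {..<k}"
      then have "i # x \<in> htV k" using x by (auto simp: htV_def)
      then show "ff beta J (h (i#x)) = (\<lambda>l. ff beta J (bc_val h1 h2 l)) (lab (i#x))" using hv by simp
    qed
    also have "\<dots> = Tg k q r (\<lambda>l. ff beta J (bc_val h1 h2 l)) (lab x)"
      using children[OF alt rk rmod qk x range[OF x], where g="\<lambda>l. ff beta J (bc_val h1 h2 l)"] by simp
    also have "\<dots> = bc_val h1 h2 (lab x)"
    proof -
      have q: "real q * ff beta J h2 = h1" using H1' by simp
      have kk: "real k * ff beta J h1 = h2" using H2' by simp
      consider "lab x = 0" | "lab x = 1" | "lab x = -1" | "lab x = 2" | "lab x = -2" using range[OF x] by auto
      then show ?thesis
      proof cases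
        case 1 then show ?thesis by (simp add: Tg_def bc_val_def ff_0 ff_neg)
      next
        case 2 then show ?thesis by (simp add: Tg_def bc_val_def ff_0 q)
      next
        case 3 then show ?thesis by (simp add: Tg_def bc_val_def ff_0 ff_neg q)
      next
        case 4 then show ?thesis by (simp add: Tg_def bc_val_def kk)
      next
        case 5 then show ?thesis by (simp add: Tg_def bc_val_def ff_neg kk)
      qed
    qed
    finally show "h x = (\<Sum>i<k. ff beta J (h (i#x)))" using hv x by simp
  qed
  define a0 where "a0 = afun beta J 0"
  define a1 where "a1 = afun beta J h1"
  define a2 where "a2 = afun beta J h2"
  define K0 where "K0 = - ln (Zn k beta J 0 h) / beta"
  define N0 where "N0 = (\<lambda>j. \<Sum>y\<in>htWn k j. ind0 (lab y))"
  define N1 where "N1 = (\<lambda>j. \<Sum>y\<in>htWn k j. ind1 (lab y))"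
  define N2 where "N2 = (\<lambda>j. \<Sum>y\<in>htWn k j. ind2 (lab y))"
  have afl: "afun beta J (bc_val h1 h2 l) = ind0 l * a0 + ind1 l * a1 + ind2 l * a2"
    if "l \<in> {-2,-1,0,1,2}" for l
    using that by (auto simp: bc_val_def ind0_def ind1_def ind2_def a0_def a1_def a2_def afun_neg)
  have Aj: "(\<Sum>y\<in>htWn k j. afun beta J (h y)) = N0 j * a0 + N1 j * a1 + N2 j * a2" for j
  proof -
    have "(\<Sum>y\<in>htWn k j. afun beta J (h y)) = (\<Sum>y\<in>htWn k j. ind0 (lab y) * a0 + ind1 (lab y) * a1 + ind2 (lab y) * a2)"
    proof (intro sum.cong refl)
      fix y assume "y \<in> htWn k j"
      then have y: "y \<in> htV k" by (rule htWn_htV)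
      show "afun beta J (h y) = ind0 (lab y) * a0 + ind1 (lab y) * a1 + ind2 (lab y) * a2"
        using hv y afl[OF range[OF y]] by simp
    qed
    then show ?thesis by (simp add: N0_def N1_def N2_def sum.distrib sum_distrib_right)
  qed
  have fe: "free_energy k beta J n h = ((\<Sum>j\<in>{1..n}. N0 j * a0 + N1 j * a1 + N2 j * a2) + K0) / (\<Sum>j\<le>n. real k ^ j)" for n
  proof -
    have "free_energy k beta J n h = ((\<Sum>j\<in>{1..n}. \<Sum>y\<in>htWn k j. afun beta J (h y)) - ln (Zn k beta J 0 h) / beta) / (\<Sum>j\<le>n. real k ^ j)"
      by (rule fe_formula[OF beta fixp])
    also have "\<dots> = ((\<Sum>j\<in>{1..n}. N0 j * a0 + N1 j * a1 + N2 j * a2) + K0) / (\<Sum>j\<le>n. real k ^ j)"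
      by (simp only: Aj K0_def diff_conv_add_uminus minus_divide_left)
    finally show ?thesis .
  qed
  have rangeW: "lab x \<in> {-2,-1,0,1,2}" if "x \<in> htWn k j" for x j
    using range htWn_htV that by blast
  have R0: "N0 (Suc j) = real r * N0 j + (real k - real q) * N1 j" for j
  proof -
    have "N0 (Suc j) = (\<Sum>x\<in>htWn k j. real r * ind0 (lab x) + (real k - real q) * ind1 (lab x))"
      unfolding N0_def level_rec[OF alt rk rmod qk] using Tg_ind0[OF _ qk] rangeW
      by (intro sum.cong) auto
    then show ?thesis by (simp add: N0_def N1_def sum.distrib sum_distrib_left)
  qed
  have R1: "N1 (Suc j) = (real k - real r) * N0 j + real k * N2 j" for j
  proof -
    have "N1 (Suc j) = (\<Sum>x\<in>htWn k j. (real k - real r) * ind0 (lab x) + real k * ind2 (lab x))"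
      unfolding N1_def level_rec[OF alt rk rmod qk] using Tg_ind1[OF _ rk rmod] rangeW
      by (intro sum.cong) auto
    then show ?thesis by (simp add: N0_def N2_def sum.distrib sum_distrib_left)
  qed
  have R2: "N2 (Suc j) = real q * N1 j" for j
  proof -
    have "N2 (Suc j) = (\<Sum>x\<in>htWn k j. real q * ind1 (lab x))"
      unfolding N2_def level_rec[OF alt rk rmod qk] using Tg_ind2 rangeW
      by (intro sum.cong) auto
    then show ?thesis by (simp add: N1_def sum_distrib_left)
  qed
  have S: "N0 j + N1 j + N2 j = real k ^ j" for j
  proof -
    have "N0 j + N1 j + N2 j = (\<Sum>y\<in>htWn k j. 1)"
      unfolding N0_def N1_def N2_def sum.distrib[symmetric]
      using rangeW by (intro sum.cong) (auto simp: ind0_def ind1_def ind2_def)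
    then show ?thesis by (simp add: card_htWn)
  qed
  have fe_fun: "(\<lambda>n. free_energy k beta J n h) = (\<lambda>n. ((\<Sum>j\<in>{1..n}. N0 j * a0 + N1 j * a1 + N2 j * a2) + K0) / (\<Sum>j\<le>n. real k ^ j))"
    using fe by (rule ext)
  have kpos: "real k \<ge> 2" using k2 by simp
  have kq: "real k - real q \<noteq> 0" using qk1 k2 by simp
  have cq: "real (k * (k - q)) = real k * (real k - real q)" using qk by (simp add: of_nat_diff)
  have partA: "r \<noteq> 0 \<longrightarrow>
      (\<lambda>n. free_energy k beta J n h) \<longlonglongrightarrow>
        real (k * (k - q)) / (2 * real k ^ 2 - real r * real k - real r * real q) *
          (afun beta J 0 + (real k - real r) / (real k - real q) * afun beta J h1
           + real q * (real k - real r) / (real k * (real k - real q)) * afun beta J h2)"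
  proof
    assume "r \<noteq> 0"
    then have r1: "1 \<le> r" by simp
    have lim: "(\<lambda>n. ((\<Sum>j\<in>{1..n}. N0 j * a0 + N1 j * a1 + N2 j * a2) + K0) / (\<Sum>j\<le>n. real k ^ j))
     \<longlonglongrightarrow> (real k * (real k - real q) * a0 + real k * (real k - real r) * a1
          + real q * (real k - real r) * a2) / (2 * real k ^ 2 - real r * real k - real r * real q)"
      by (rule case_a_abstract[OF k2 q1 qk1 r1 rk R0 R1 R2 S])
    have "real (k * (k - q)) * (a0 + (real k - real r) / (real k - real q) * a1
           + real q * (real k - real r) / (real k * (real k - real q)) * a2)
        = real k * (real k - real q) * a0 + real k * (real k - real r) * a1 + real q * (real k - real r) * a2"
    proof -
      note gen = gen_aux[of _ a0 _ a1 _ a2]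
      have e1: "real k * (real k - real q) * ((real k - real r) / (real k - real q)) = real k * (real k - real r)"
        using kq by (rule e1_aux)
      have e2: "real k * (real k - real q) * (real q * (real k - real r) / (real k * (real k - real q))) = real q * (real k - real r)"
        using kq kpos by (intro e2_aux) auto
      show ?thesis unfolding cq gen e1 e2 ..
    qed
    then have val: "real (k * (k - q)) / (2 * real k ^ 2 - real r * real k - real r * real q) *
          (a0 + (real k - real r) / (real k - real q) * a1
           + real q * (real k - real r) / (real k * (real k - real q)) * a2)
        = (real k * (real k - real q) * a0 + real k * (real k - real r) * a1
          + real q * (real k - real r) * a2) / (2 * real k ^ 2 - real r * real k - real r * real q)"
      by (simp only: times_divide_eq_left)
    show "(\<lambda>n. free_energy k beta J n h) \<longlonglongrightarrow>
        real (k * (k - q)) / (2 * real k ^ 2 - real r * real k - real r * real q) *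
          (afun beta J 0 + (real k - real r) / (real k - real q) * afun beta J h1
           + real q * (real k - real r) / (real k * (real k - real q)) * afun beta J h2)"
      unfolding fe_fun a0_def[symmetric] a1_def[symmetric] a2_def[symmetric] val by (rule lim)
  qed
  define P where "P = (real k - real q) * a0 + real q * a2"
  define A where "A = (\<lambda>j. N0 j * a0 + N1 j * a1 + N2 j * a2)"
  have fe2: "free_energy k beta J n h = ((\<Sum>j\<in>{1..n}. A j) + K0) / (\<Sum>j\<le>n. real k ^ j)" for n
    unfolding fe A_def ..
  have partB: "r = 0 \<Longrightarrow> (N1 0 = 0 \<longrightarrow>
      (\<lambda>m. free_energy k beta J (2 * m) h) \<longlonglongrightarrow> (real k * a1 + real k * P) / (real k * (real k + 1))
      \<and> (\<lambda>m. free_energy k beta J (2 * m + 1) h) \<longlonglongrightarrow>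
           (real k * a1 + real k * P) / (real k ^ 2 * (real k + 1)) + real k * a1 * (real k - 1) / real k ^ 2)
     \<and> (N1 0 = 1 \<longrightarrow>
      (\<lambda>m. free_energy k beta J (2 * m) h) \<longlonglongrightarrow> (P + real k ^ 2 * a1) / (real k * (real k + 1))
      \<and> (\<lambda>m. free_energy k beta J (2 * m + 1) h) \<longlonglongrightarrow>
           (P + real k ^ 2 * a1) / (real k ^ 2 * (real k + 1)) + P * (real k - 1) / real k ^ 2)"
  proof -
    assume r0: "r = 0"
    have N1s: "N1 (Suc j) = real k * (real k ^ j - N1 j)" for j
    proof -
      have "N0 j + N2 j = real k ^ j - N1 j" using S[of j] by linarith
      moreover have "N1 (Suc j) = real k * (N0 j + N2 j)" using R1[of j] r0 by (simp add: algebra_simps)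
      ultimately show ?thesis by simp
    qed
    have Asuc: "A (Suc j) = N1 (Suc j) * a1 + N1 j * P" for j
    proof -
      have "N0 (Suc j) = (real k - real q) * N1 j" using R0[of j] r0 by simp
      note e = this
      show ?thesis unfolding A_def P_def R2 e by (simp add: algebra_simps)
    qed
    have kK: "real k ^ (2*i) = (real k ^ 2) ^ i" for i by (simp add: power_mult)
    show ?thesis
    proof (intro conjI impI)
      assume n0: "N1 0 = 0"
      have cf: "N1 j = (if even j then 0 else real k ^ j)" for j
        by (induction j) (auto simp: n0 N1s)
      have A1: "A (Suc (2*i)) = real k * a1 * (real k ^ 2) ^ i" for i
        unfolding Asuc cf by (simp add: kK[symmetric])
      have A2: "A (Suc (Suc (2*i))) = real k * P * (real k ^ 2) ^ i" for i
        unfolding Asuc cf by (simp add: kK[symmetric])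
      note L = case_b_generic[OF k2 A1 A2, of K0]
      show "(\<lambda>m. free_energy k beta J (2 * m) h) \<longlonglongrightarrow> (real k * a1 + real k * P) / (real k * (real k + 1))"
        unfolding fe2 using L(1) .
      show "(\<lambda>m. free_energy k beta J (2 * m + 1) h) \<longlonglongrightarrow>
           (real k * a1 + real k * P) / (real k ^ 2 * (real k + 1)) + real k * a1 * (real k - 1) / real k ^ 2"
        unfolding fe2 using L(2) .
    next
      assume n0: "N1 0 = 1"
      have cf: "N1 j = (if even j then real k ^ j else 0)" for j
        by (induction j) (auto simp: n0 N1s)
      have A1: "A (Suc (2*i)) = P * (real k ^ 2) ^ i" for i
        unfolding Asuc cf by (simp add: kK[symmetric])
      have A2: "A (Suc (Suc (2*i))) = real k ^ 2 * a1 * (real k ^ 2) ^ i" for i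
      proof -
        have pw: "real k ^ Suc (Suc (2*i)) = real k ^ 2 * (real k ^ 2) ^ i"
          unfolding power_mult[symmetric] power_add[symmetric] by simp
        show ?thesis unfolding Asuc cf using pw by simp
      qed
      note L = case_b_generic[OF k2 A1 A2, of K0]
      show "(\<lambda>m. free_energy k beta J (2 * m) h) \<longlonglongrightarrow> (P + real k ^ 2 * a1) / (real k * (real k + 1))"
        unfolding fe2 using L(1) .
      show "(\<lambda>m. free_energy k beta J (2 * m + 1) h) \<longlonglongrightarrow>
           (P + real k ^ 2 * a1) / (real k ^ 2 * (real k + 1)) + P * (real k - 1) / real k ^ 2"
        unfolding fe2 using L(2) .
    qed
  qed
  have N10: "N1 0 = ind1 (lab [])" by (simp add: N1_def htWn_0)
  have x0: "real k \<noteq> 0" "real k + 1 \<noteq> 0" using kpos by auto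
  have partB': "r = 0 \<and> lab [] \<in> {0, 2, -2} \<longrightarrow>
      (\<lambda>m. free_energy k beta J (2 * m) h) \<longlonglongrightarrow>
        (real k - real q) / (real k + 1) * afun beta J 0 + 1 / (real k + 1) * afun beta J h1
        + real q / (real k + 1) * afun beta J h2
      \<and> (\<lambda>m. free_energy k beta J (2 * m + 1) h) \<longlonglongrightarrow>
        (real k - real q) / (real k * (real k + 1)) * afun beta J 0 + real k / (real k + 1) * afun beta J h1
        + real q / (real k * (real k + 1)) * afun beta J h2"
  proof
    assume a: "r = 0 \<and> lab [] \<in> {0, 2, -2}"
    then have "N1 0 = 0" unfolding N10 by (auto simp: ind1_def)
    then have L: "(\<lambda>m. free_energy k beta J (2 * m) h) \<longlonglongrightarrow> (real k * a1 + real k * P) / (real k * (real k + 1))"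
      "(\<lambda>m. free_energy k beta J (2 * m + 1) h) \<longlonglongrightarrow>
           (real k * a1 + real k * P) / (real k ^ 2 * (real k + 1)) + real k * a1 * (real k - 1) / real k ^ 2"
      using partB a by auto
    show "(\<lambda>m. free_energy k beta J (2 * m) h) \<longlonglongrightarrow>
        (real k - real q) / (real k + 1) * afun beta J 0 + 1 / (real k + 1) * afun beta J h1
        + real q / (real k + 1) * afun beta J h2
      \<and> (\<lambda>m. free_energy k beta J (2 * m + 1) h) \<longlonglongrightarrow>
        (real k - real q) / (real k * (real k + 1)) * afun beta J 0 + real k / (real k + 1) * afun beta J h1
        + real q / (real k * (real k + 1)) * afun beta J h2"
      using L unfolding P_def a0_def[symmetric] a1_def[symmetric] a2_def[symmetric] v1[OF x0] v2[OF x0] by simp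
  qed
  have partB'': "r = 0 \<and> lab [] \<in> {1, -1} \<longrightarrow>
      (\<lambda>m. free_energy k beta J (2 * m) h) \<longlonglongrightarrow>
        (real k - real q) / (real k * (real k + 1)) * afun beta J 0 + real k / (real k + 1) * afun beta J h1
        + real q / (real k * (real k + 1)) * afun beta J h2
      \<and> (\<lambda>m. free_energy k beta J (2 * m + 1) h) \<longlonglongrightarrow>
        (real k - real q) / (real k + 1) * afun beta J 0 + 1 / (real k + 1) * afun beta J h1
        + real q / (real k + 1) * afun beta J h2"
  proof
    assume a: "r = 0 \<and> lab [] \<in> {1, -1}"
    then have "N1 0 = 1" unfolding N10 by (auto simp: ind1_def)
    then have L: "(\<lambda>m. free_energy k beta J (2 * m) h) \<longlonglongrightarrow> (P + real k ^ 2 * a1) / (real k * (real k + 1))"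
      "(\<lambda>m. free_energy k beta J (2 * m + 1) h) \<longlonglongrightarrow>
           (P + real k ^ 2 * a1) / (real k ^ 2 * (real k + 1)) + P * (real k - 1) / real k ^ 2"
      using partB a by auto
    show "(\<lambda>m. free_energy k beta J (2 * m) h) \<longlonglongrightarrow>
        (real k - real q) / (real k * (real k + 1)) * afun beta J 0 + real k / (real k + 1) * afun beta J h1
        + real q / (real k * (real k + 1)) * afun beta J h2
      \<and> (\<lambda>m. free_energy k beta J (2 * m + 1) h) \<longlonglongrightarrow>
        (real k - real q) / (real k + 1) * afun beta J 0 + 1 / (real k + 1) * afun beta J h1
        + real q / (real k + 1) * afun beta J h2"
      using L unfolding P_def a0_def[symmetric] a1_def[symmetric] a2_def[symmetric] v3[OF x0] v4[OF x0] by simp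
  qed
  show ?thesis using partA partB' partB'' by blast
qed

end
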